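(* Let $m\ge1$, $n\in\mathbb{Z}$, and let $B=(b_0,\ldots,b_{m-1})$ and $T=(t_0,\ldots,t_{m-1})$ be sequences of integers with $\sum_i b_i\le n$ and $\sum_i t_i=n-m+1$. Then for every $l\in\{1,\ldots,m\}$ there exists $i\in\{0,\ldots,m-1\}$ such that for every $l'\in\{1,\ldots,l\}$, $$\sum_{j=i}^{i+l'-1}b_j\le l'-1+\sum_{j=i}^{i+l'-1}t_j.$$
   Context: Indices of $B$ and $T$ are taken modulo $m$ (ring arrangement); $\sum_{j=i}^{i+l'-1}b_j$ is the sum of the chain of $l'$ consecutive boxes starting at $b_i$. *)

theory Defs
  imports Main
begin

end

theory Submission
  imports Defs
begin

theorem mainTheorem6:
  fixes m :: nat and n :: int and b t :: "nat \<Rightarrow> int"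
  assumes "m \<ge> 1"
    and "(\<Sum>i<m. b i) \<le> n"
    and "(\<Sum>i<m. t i) = n - int m + 1"
  shows "\<forall>l\<in>{1..m}. \<exists>i\<in>{0..<m}. \<forall>l'\<in>{1..l}.
           (\<Sum>j=i..<i+l'. b (j mod m)) \<le> int l' - 1 + (\<Sum>j=i..<i+l'. t (j mod m))"
proof -
  define d where "d j = b (j mod m) - t (j mod m) - 1" for j
  define S where "S k = (\<Sum>j<k. d j)" for k
  have dper: "d (m + j) = d j" for j unfolding d_def by simp
  have Sm: "S m \<le> -1"
  proof -
    have "S m = (\<Sum>j<m. b j) - (\<Sum>j<m. t j) - int m"
      unfolding S_def d_def by (simp add: sum_subtractf)
    then show ?thesis using assms by simp
  qed
  have Sper: "S (m + k) = S m + S k" for k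
    by (induct k) (auto simp: S_def dper)
  have diff: "(\<Sum>j=i..<i+l'. d j) = S (i+l') - S i" for i l'
  proof -
    have "(\<Sum>j=0..<i. d j) + (\<Sum>j=i..<i+l'. d j) = (\<Sum>j=0..<i+l'. d j)"
      by (rule sum.atLeastLessThan_concat) auto
    then show ?thesis unfolding S_def by (simp add: atLeast0LessThan)
  qed
  have conv: "(\<Sum>j=i..<i+l'. b (j mod m)) \<le> int l' - 1 + (\<Sum>j=i..<i+l'. t (j mod m))"
    if "S (i+l') < S i" for i l'
  proof -
    have "(\<Sum>j=i..<i+l'. d j) = (\<Sum>j=i..<i+l'. b (j mod m)) - (\<Sum>j=i..<i+l'. t (j mod m)) - int l'"
      unfolding d_def by (simp add: sum_subtractf)
    then show ?thesis using that diff[of i l'] by simp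
  qed
  define mx where "mx = Max (S ` {..<m})"
  have fin: "finite (S ` {..<m})" by simp
  have ne: "S ` {..<m} \<noteq> {}" proof - have "0 \<in> {..<m}" using assms(1) by simp then show ?thesis by blast qed
  have mxle: "k < m \<Longrightarrow> S k \<le> mx" for k unfolding mx_def using fin by auto
  have "mx \<in> S ` {..<m}" unfolding mx_def using fin ne by (rule Max_in)
  then have Mne: "{k. k < m \<and> S k = mx} \<noteq> {}" by auto
  define i where "i = Max {k. k < m \<and> S k = mx}"
  have "i \<in> {k. k < m \<and> S k = mx}" unfolding i_def by (rule Max_in) (use Mne in auto)
  then have im: "i < m" and Si: "S i = mx" by auto
  have imax: "\<And>k. k < m \<Longrightarrow> S k = mx \<Longrightarrow> k \<le> i" unfolding i_def
    by (rule Max_ge) auto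
  have key: "S (i+l') < S i" if "1 \<le> l'" "l' \<le> m" for l'
  proof (cases "i + l' < m")
    case True
    have "S (i+l') \<le> mx" using mxle True by auto
    moreover have "S (i+l') \<noteq> mx" using imax[of "i+l'"] True that by auto
    ultimately show ?thesis using Si by auto
  next
    case False
    define k where "k = i + l' - m"
    have k: "i + l' = m + k" "k < m" using False that im unfolding k_def by linarith+
    have "S (i+l') = S m + S k" using k Sper by simp
    then show ?thesis using Sm mxle[OF k(2)] Si by simp
  qed
  show ?thesis
  proof (intro ballI)
    fix l assume "l \<in> {1..m}"
    show "\<exists>i\<in>{0..<m}. \<forall>l'\<in>{1..l}.
           (\<Sum>j=i..<i+l'. b (j mod m)) \<le> int l' - 1 + (\<Sum>j=i..<i+l'. t (j mod m))"
      using im key conv \<open>l \<in> {1..m}\<close> by (intro bexI[of _ i]) auto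
  qed
qed

end
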